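(* Let $A\in\mathbb{C}^{n\times n}$ and let $\|\cdot\|$ be any vector norm on $\mathbb{C}^n$ with induced matrix norm. Then $\inf_{t\in\mathbb{R}}\|Q_1(t)\|>0$, and for every $u\in\mathbb{C}^n$ satisfying the RLGE condition, $\inf_{t\in\mathbb{R}}\|Q_1(t)u\|>0$. Consequently, for $y_0\neq0$ and unit $\hat z_0$ both satisfying the RLGE condition, the functions $t\mapsto \|Q_1(t)\hat z_0\|/\|Q_1(t)\hat y_0\|$ and $t\mapsto \|Q_1(t)\|/\|Q_1(t)\hat y_0\|$ are bounded on $\mathbb{R}$ and bounded away from $0$ on $\mathbb{R}$.
   Context: $\hat y_0=y_0/\|y_0\|$. Let $\lambda_1,\dots,\lambda_p$ be the distinct eigenvalues of $A$, $\omega_i=\operatorname{Im}\lambda_i$. Fix a Jordan basis $v^{(i,j,k)}$, $i\in\{1,\dots,p\}$, $j\in\{1,\dots,d_i\}$ ($d_i$ the geometric multiplicity of $\lambda_i$), $k\in\{1,\dots,m_{ij}\}$, consisting of Jordan chains: $(A-\lambda_iI)v^{(i,j,1)}=0$, $(A-\lambda_iI)v^{(i,j,k)}=v^{(i,j,k-1)}$ for $k\ge2$. Let $V$ be the matrix with these columns in lexicographic order of $(i,j,k)$ and $w^{(i,j,k)}$ the rows of $V^{-1}$ in the same order; $\alpha_{ijk}(u)=w^{(i,j,k)}u$. $\Lambda_1$ is the set of eigenvalues with maximal real part, $M_1=\max_{\lambda_i\in\Lambda_1}\max_j m_{ij}$, and $$Q_1(t)=\sum_{\lambda_i\in\Lambda_1,\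 j\in\{1,\dots,d_i\},\ m_{ij}=M_1} e^{\sqrt{-1}\,\omega_i t}\,v^{(i,j,1)}w^{(i,j,M_1)}.$$ $u$ satisfies the RLGE condition if $\alpha_{ijM_1}(u)\neq0$ for some $(i,j)$ with $\lambda_i\in\Lambda_1$, $m_{ij}=M_1$. *)

theory Defs
  imports "HOL-Analysis.Analysis"
begin

definition is_vec_norm :: "(complex^'n \<Rightarrow> real) \<Rightarrow> bool" where
  "is_vec_norm N \<longleftrightarrow>
     (\<forall>x. N x = 0 \<longleftrightarrow> x = 0) \<and>
     (\<forall>c x. N (c *s x) = cmod c * N x) \<and>
     (\<forall>x y. N (x + y) \<le> N x + N y)"

definition ind_norm :: "(complex^'n \<Rightarrow> real) \<Rightarrow> complex^'n^'n \<Rightarrow> real" where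
  "ind_norm N M = Sup {N (M *v x) / N x | x. x \<noteq> 0}"

definition jidx :: "nat \<Rightarrow> (nat \<Rightarrow> nat) \<Rightarrow> (nat \<Rightarrow> nat \<Rightarrow> nat) \<Rightarrow> (nat \<times> nat \<times> nat) set" where
  "jidx p d m = {(i,j,k). 1 \<le> i \<and> i \<le> p \<and> 1 \<le> j \<and> j \<le> d i \<and> 1 \<le> k \<and> k \<le> m i j}"

text \<open>The matrix V whose columns are the Jordan basis vectors; column c carries
  the vector with label idx c.\<close>
definition jmat :: "(nat \<Rightarrow> nat \<Rightarrow> nat \<Rightarrow> complex^'n) \<Rightarrow> ('n \<Rightarrow> nat \<times> nat \<times> nat) \<Rightarrow> complex^'n^'n" where
  "jmat v idx = (\<chi> r c. (case idx c of (i,j,k) \<Rightarrow> v i j k) $ r)"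

text \<open>Jordan basis data for A: distinct eigenvalues lam 1..lam p (exactly the
  eigenvalues of A), d i chains for lam i, chain lengths m i j, chain vectors v i j k,
  labelling idx of the columns of V.\<close>
definition jordan_basis ::
  "complex^'n^'n \<Rightarrow> nat \<Rightarrow> (nat \<Rightarrow> complex) \<Rightarrow> (nat \<Rightarrow> nat) \<Rightarrow> (nat \<Rightarrow> nat \<Rightarrow> nat)
     \<Rightarrow> (nat \<Rightarrow> nat \<Rightarrow> nat \<Rightarrow> complex^'n) \<Rightarrow> ('n \<Rightarrow> nat \<times> nat \<times> nat) \<Rightarrow> bool" where
  "jordan_basis A p lam d m v idx \<longleftrightarrow>
     inj_on lam {1..p} \<and>
     lam ` {1..p} = {\<mu>. \<exists>x. x \<noteq> 0 \<and> A *v x = \<mu> *s x} \<and>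
     (\<forall>i\<in>{1..p}. 1 \<le> d i \<and> (\<forall>j\<in>{1..d i}. 1 \<le> m i j)) \<and>
     (\<forall>i\<in>{1..p}. \<forall>j\<in>{1..d i}.
        (A - mat (lam i)) *v v i j 1 = 0 \<and>
        (\<forall>k\<in>{2..m i j}. (A - mat (lam i)) *v v i j k = v i j (k - 1))) \<and>
     bij_betw idx UNIV (jidx p d m) \<and>
     invertible (jmat v idx)"

definition jrow :: "(nat \<Rightarrow> nat \<Rightarrow> nat \<Rightarrow> complex^'n) \<Rightarrow> ('n \<Rightarrow> nat \<times> nat \<times> nat)
     \<Rightarrow> nat \<Rightarrow> nat \<Rightarrow> nat \<Rightarrow> complex^'n" where
  "jrow v idx i j k = row (inv idx (i,j,k)) (matrix_inv (jmat v idx))"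

definition jcoord :: "(nat \<Rightarrow> nat \<Rightarrow> nat \<Rightarrow> complex^'n) \<Rightarrow> ('n \<Rightarrow> nat \<times> nat \<times> nat)
     \<Rightarrow> nat \<Rightarrow> nat \<Rightarrow> nat \<Rightarrow> complex^'n \<Rightarrow> complex" where
  "jcoord v idx i j k u = (\<Sum>c\<in>UNIV. jrow v idx i j k $ c * u $ c)"

definition Lam1 :: "nat \<Rightarrow> (nat \<Rightarrow> complex) \<Rightarrow> nat set" where
  "Lam1 p lam = {i\<in>{1..p}. \<forall>i'\<in>{1..p}. Re (lam i') \<le> Re (lam i)}"

definition M1 :: "nat \<Rightarrow> (nat \<Rightarrow> complex) \<Rightarrow> (nat \<Rightarrow> nat) \<Rightarrow> (nat \<Rightarrow> nat \<Rightarrow> nat) \<Rightarrow> nat" where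
  "M1 p lam d m = Max {m i j | i j. i \<in> Lam1 p lam \<and> j \<in> {1..d i}}"

definition Q1 :: "nat \<Rightarrow> (nat \<Rightarrow> complex) \<Rightarrow> (nat \<Rightarrow> nat) \<Rightarrow> (nat \<Rightarrow> nat \<Rightarrow> nat)
     \<Rightarrow> (nat \<Rightarrow> nat \<Rightarrow> nat \<Rightarrow> complex^'n) \<Rightarrow> ('n \<Rightarrow> nat \<times> nat \<times> nat) \<Rightarrow> real \<Rightarrow> complex^'n^'n" where
  "Q1 p lam d m v idx t =
     (\<Sum>(i,j)\<in>{(i,j). i \<in> Lam1 p lam \<and> j \<in> {1..d i} \<and> m i j = M1 p lam d m}.
        (\<chi> r c. exp (\<i> * of_real (Im (lam i)) * of_real t) *
           (v i j 1 $ r * jrow v idx i j (M1 p lam d m) $ c)))"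

definition rlge :: "nat \<Rightarrow> (nat \<Rightarrow> complex) \<Rightarrow> (nat \<Rightarrow> nat) \<Rightarrow> (nat \<Rightarrow> nat \<Rightarrow> nat)
     \<Rightarrow> (nat \<Rightarrow> nat \<Rightarrow> nat \<Rightarrow> complex^'n) \<Rightarrow> ('n \<Rightarrow> nat \<times> nat \<times> nat) \<Rightarrow> complex^'n \<Rightarrow> bool" where
  "rlge p lam d m v idx u \<longleftrightarrow>
     (\<exists>i j. i \<in> Lam1 p lam \<and> j \<in> {1..d i} \<and> m i j = M1 p lam d m \<and>
        jcoord v idx i j (M1 p lam d m) u \<noteq> 0)"

end

theory Submission
  imports Defs
begin

lemma vn_zero: assumes "is_vec_norm N" shows "N 0 = 0"
  using assms unfolding is_vec_norm_def by blast

lemma vn_scale: assumes "is_vec_norm N" shows "N (c *s x) = cmod c * N x"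
  using assms unfolding is_vec_norm_def by blast

lemma vn_tri: assumes "is_vec_norm N" shows "N (x + y) \<le> N x + N y"
  using assms unfolding is_vec_norm_def by blast

lemma vn_pos: assumes "is_vec_norm N" "x \<noteq> 0" shows "N x > 0"
proof -
  have "N (x + (-1) *s x) \<le> N x + N ((-1) *s x)" by (rule vn_tri[OF assms(1)])
  moreover have "x + (-1) *s x = 0" by (simp add: vec_eq_iff)
  moreover have "N ((-1) *s x) = N x" using vn_scale[OF assms(1), of "-1" x] by simp
  moreover have "N x \<noteq> 0" using assms unfolding is_vec_norm_def by blast
  ultimately have "N 0 \<le> N x + N x" by simp
  then show ?thesis using vn_zero[OF assms(1)] \<open>N x \<noteq> 0\<close> by linarith
qed

lemma vn_nonneg: assumes "is_vec_norm N" shows "N x \<ge> 0"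
  using vn_pos[OF assms, of x] vn_zero[OF assms] by (cases "x = 0") auto

lemma vn_sum: assumes "is_vec_norm N" "finite S"
  shows "N (sum f S) \<le> (\<Sum>s\<in>S. N (f s))"
  using assms(2)
proof (induction S rule: finite_induct)
  case empty then show ?case using vn_zero[OF assms(1)] by simp
next
  case (insert a S)
  have "N (sum f (insert a S)) = N (f a + sum f S)" using insert by simp
  also have "\<dots> \<le> N (f a) + N (sum f S)" by (rule vn_tri[OF assms(1)])
  also have "\<dots> \<le> N (f a) + (\<Sum>s\<in>S. N (f s))" using insert by simp
  finally show ?case using insert by simp
qed

lemma vn_upper: fixes N :: "complex^'n \<Rightarrow> real" assumes "is_vec_norm N"
  shows "\<exists>K>0. \<forall>x. N x \<le> K * norm x"
proof -
  define K where "K = (\<Sum>i\<in>UNIV. N (axis i (1::complex))) + 1"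
  have K0: "K > 0" unfolding K_def using vn_nonneg[OF assms] by (simp add: add_nonneg_pos sum_nonneg)
  have "N x \<le> K * norm x" for x
  proof -
    have ex: "x = (\<Sum>i\<in>UNIV. x$i *s axis i (1::complex))"
    proof (subst vec_eq_iff, intro allI)
      fix i
      have "(\<Sum>j\<in>UNIV. x$j * (if i = j then 1 else 0)) = (\<Sum>j\<in>UNIV. if j = i then x$j else 0)"
        by (rule sum.cong) auto
      then show "x $ i = (\<Sum>i\<in>UNIV. x $ i *s axis i (1::complex)) $ i"
        by (simp add: sum_component axis_def)
    qed
    have "N x \<le> (\<Sum>i\<in>UNIV. N (x$i *s axis i (1::complex)))"
      by (subst ex, rule vn_sum[OF assms], simp)
    also have "\<dots> = (\<Sum>i\<in>UNIV. cmod (x$i) * N (axis i (1::complex)))"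
      using vn_scale[OF assms] by simp
    also have "\<dots> \<le> (\<Sum>i\<in>UNIV. norm x * N (axis i (1::complex)))"
      by (intro sum_mono mult_right_mono Finite_Cartesian_Product.norm_nth_le vn_nonneg[OF assms])
    also have "\<dots> = norm x * (K - 1)" by (simp add: K_def sum_distrib_left)
    also have "\<dots> \<le> K * norm x" by (simp add: algebra_simps)
    finally show ?thesis .
  qed
  then show ?thesis using K0 by blast
qed

lemma ofreal_smult: "(complex_of_real r) *s x = r *\<^sub>R x"
  proof (subst vec_eq_iff, intro allI)
  fix i
  have "(r *\<^sub>R x)$i = of_real r * x$i" by (rule trans[OF vector_scaleR_component scaleR_conv_of_real])
  then show "(complex_of_real r *s x) $ i = (r *\<^sub>R x) $ i" by simp
qed

lemma vn_lower: fixes N :: "complex^'n \<Rightarrow> real" assumes "is_vec_norm N"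
  shows "\<exists>k>0. \<forall>x. k * norm x \<le> N x"
proof -
  obtain K where K: "K > 0" "\<And>x. N x \<le> K * norm x" using vn_upper[OF assms] by blast
  have lip: "\<bar>N x - N y\<bar> \<le> K * norm (x - y)" for x y
  proof -
    have "N x \<le> N (x - y) + N y" using vn_tri[OF assms, of "x - y" y] by simp
    moreover have "N y \<le> N (y - x) + N x" using vn_tri[OF assms, of "y - x" x] by simp
    moreover have "N (y - x) = N (x - y)"
    proof -
      have "y - x = (-1) *s (x - y)" by (simp add: vec_eq_iff)
      then show ?thesis using vn_scale[OF assms, of "-1" "x - y"] by simp
    qed
    moreover have "N (x - y) \<le> K * norm (x - y)" by (rule K(2))
    ultimately show ?thesis by linarith
  qed
  have cont: "continuous_on (sphere 0 1) N"
    unfolding continuous_on_iff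
  proof (intro ballI allI impI)
    fix x e assume "x \<in> sphere (0::complex^'n) 1" "(e::real) > 0"
    show "\<exists>d>0. \<forall>x'\<in>sphere 0 1. dist x' x < d \<longrightarrow> dist (N x') (N x) < e"
    proof (intro exI[of _ "e / K"] conjI ballI impI)
      show "e / K > 0" using K \<open>e > 0\<close> by simp
      fix x' assume "dist x' x < e / K"
      then have "K * norm (x' - x) < e" using K by (simp add: dist_norm field_simps)
      then show "dist (N x') (N x) < e" using lip[of x' x] by (simp add: dist_real_def)
    qed
  qed
  obtain x0 where x0: "x0 \<in> sphere (0::complex^'n) 1" "\<And>y. y \<in> sphere 0 1 \<Longrightarrow> N x0 \<le> N y"
    using continuous_attains_inf[OF compact_sphere _ cont] by force
  have "x0 \<noteq> 0" using x0(1) by auto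
  then have k0: "N x0 > 0" by (rule vn_pos[OF assms])
  have "N x0 * norm x \<le> N x" for x
  proof (cases "x = 0")
    case True then show ?thesis using vn_zero[OF assms] by simp
  next
    case False
    define y where "y = complex_of_real (1 / norm x) *s x"
    have "y = (1 / norm x) *\<^sub>R x" unfolding y_def by (rule ofreal_smult)
    then have "norm y = 1" using False by simp
    then have "N x0 \<le> N y" using x0(2) by simp
    also have "N y = N x / norm x" using vn_scale[OF assms] False by (simp add: y_def norm_divide)
    finally show ?thesis using False by (simp add: field_simps)
  qed
  then show ?thesis using k0 by blast
qed

lemma ind_norm_ge: fixes N :: "complex^'n \<Rightarrow> real"
  assumes "is_vec_norm N" "\<And>x. N (M *v x) \<le> D * N x" "x \<noteq> 0"
  shows "N (M *v x) / N x \<le> ind_norm N M"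
  unfolding ind_norm_def
proof (rule cSup_upper)
  show "N (M *v x) / N x \<in> {N (M *v x) / N x |x. x \<noteq> 0}" using assms(3) by blast
  show "bdd_above {N (M *v x) / N x |x. x \<noteq> 0}"
  proof (rule bdd_aboveI[of _ D])
    fix y assume "y \<in> {N (M *v x) / N x |x. x \<noteq> 0}"
    then have "\<exists>z. y = N (M *v z) / N z \<and> z \<noteq> 0" by simp
    then obtain z where z: "z \<noteq> 0" "y = N (M *v z) / N z" by blast
    have "N z > 0" using vn_pos[OF assms(1) z(1)] .
    then show "y \<le> D" using z(2) assms(2)[of z] by (simp add: pos_divide_le_eq)
  qed
qed

lemma ind_norm_le: fixes N :: "complex^'n \<Rightarrow> real"
  assumes "is_vec_norm N" "\<And>x. N (M *v x) \<le> D * N x"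
  shows "ind_norm N M \<le> D"
  unfolding ind_norm_def
proof (rule cSup_least)
  have "axis (undefined::'n) (1::complex) $ undefined = 1" by (simp add: axis_def)
  then have "axis (undefined::'n) (1::complex) \<noteq> 0" by auto
  then show "{N (M *v x) / N x |x. x \<noteq> 0} \<noteq> {}" by blast
  show "y \<le> D" if "y \<in> {N (M *v x) / N x |x. x \<noteq> 0}" for y
  proof -
    have "\<exists>z. y = N (M *v z) / N z \<and> z \<noteq> 0" using that by simp
    then obtain z where z: "z \<noteq> 0" "y = N (M *v z) / N z" by blast
    have "N z > 0" using vn_pos[OF assms(1) z(1)] .
    then show "y \<le> D" using z(2) assms(2)[of z] by (simp add: pos_divide_le_eq)
  qed
qed


lemma matrix_inv_left': assumes "invertible (V::complex^'n^'n)" shows "matrix_inv V ** V = mat 1"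
proof -
  have "\<exists>A'. V ** A' = mat 1 \<and> A' ** V = mat 1" using assms unfolding invertible_def by blast
  then have "V ** matrix_inv V = mat 1 \<and> matrix_inv V ** V = mat 1"
    unfolding matrix_inv_def by (rule someI_ex)
  then show ?thesis by blast
qed

lemma ratio_bounds: fixes a b al C l :: real
  assumes "0 < al" "al \<le> a" "a \<le> C" "0 < l" "l \<le> b" "b \<le> C"
  shows "\<bar>a / b\<bar> \<le> C / l" "al / C \<le> a / b"
proof -
  have "a / b \<le> C / l" by (rule frac_le) (use assms in auto)
  moreover have "a / b \<ge> 0" using assms by auto
  ultimately show "\<bar>a / b\<bar> \<le> C / l" by simp
  show "al / C \<le> a / b" by (rule frac_le) (use assms in auto)
qed

theorem mainTheorem2:
  fixes A :: "complex^'n^'n" and N :: "complex^'n \<Rightarrow> real"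
    and p :: nat and lam :: "nat \<Rightarrow> complex" and d :: "nat \<Rightarrow> nat"
    and m :: "nat \<Rightarrow> nat \<Rightarrow> nat" and v :: "nat \<Rightarrow> nat \<Rightarrow> nat \<Rightarrow> complex^'n"
    and idx :: "'n \<Rightarrow> nat \<times> nat \<times> nat"
  assumes norm: "is_vec_norm N"
    and jb: "jordan_basis A p lam d m v idx"
  shows "(INF t. ind_norm N (Q1 p lam d m v idx t)) > 0
    \<and> (\<forall>u. rlge p lam d m v idx u \<longrightarrow> (INF t. N (Q1 p lam d m v idx t *v u)) > 0)
    \<and> (\<forall>y0 z0. y0 \<noteq> 0 \<and> N z0 = 1 \<and> rlge p lam d m v idx y0 \<and> rlge p lam d m v idx z0 \<longrightarrow>
        (let yh = (1 / N y0) *s y0;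
             f = (\<lambda>t. N (Q1 p lam d m v idx t *v z0) / N (Q1 p lam d m v idx t *v yh));
             g = (\<lambda>t. ind_norm N (Q1 p lam d m v idx t) / N (Q1 p lam d m v idx t *v yh))
         in (\<exists>B. \<forall>t. \<bar>f t\<bar> \<le> B) \<and> (\<exists>c>0. \<forall>t. f t \<ge> c)
          \<and> (\<exists>B. \<forall>t. \<bar>g t\<bar> \<le> B) \<and> (\<exists>c>0. \<forall>t. g t \<ge> c)))"
proof -
  define V where "V = jmat v idx"
  define W where "W = matrix_inv V"
  define M where "M = M1 p lam d m"
  define S where "S = {(i,j). i \<in> Lam1 p lam \<and> j \<in> {1..d i} \<and> m i j = M}"
  define E where "E = (\<lambda>i t. exp (\<i> * of_real (Im (lam i)) * of_real (t::real)))"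
  have bij: "bij_betw idx UNIV (jidx p d m)" and inv: "invertible V"
    and dm: "\<And>i j. i\<in>{1..p} \<Longrightarrow> 1 \<le> d i \<and> (j\<in>{1..d i} \<longrightarrow> 1 \<le> m i j)"
    using jb unfolding jordan_basis_def V_def by auto
  have WV: "W ** V = mat 1" unfolding W_def by (rule matrix_inv_left'[OF inv])
  have rng: "idx ` UNIV = jidx p d m" using bij by (simp add: bij_betw_def)
  have idxinv: "x \<in> jidx p d m \<Longrightarrow> idx (inv idx x) = x" for x
    using rng by (metis f_inv_into_f)
  have finJ: "finite (jidx p d m)" using rng[symmetric] by simp
  have colV: "v i j k = column (inv idx (i,j,k)) V" if "(i,j,k) \<in> jidx p d m" for i j k
  proof -
    have "column c V = (case idx c of (i,j,k) \<Rightarrow> v i j k)" for c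
      by (simp add: vec_eq_iff V_def jmat_def column_def)
    then show ?thesis using idxinv[OF that] by simp
  qed
  have Wcol: "W *v column c V = axis c 1" for c
  proof -
    have "(W *v column c V)$r = (W ** V)$r$c" for r
      by (simp add: matrix_vector_mult_def matrix_matrix_mult_def column_def)
    then show ?thesis by (simp add: WV vec_eq_iff mat_def axis_def)
  qed
  have Wv: "W *v v i j k = axis (inv idx (i,j,k)) 1" if "(i,j,k) \<in> jidx p d m" for i j k
    using colV[OF that] Wcol by simp
  have jc: "jcoord v idx i j k u = (W *v u) $ (inv idx (i,j,k))" for i j k u
    by (simp add: jcoord_def jrow_def row_def matrix_vector_mult_def W_def V_def)
  have Qapp: "Q1 p lam d m v idx t *v u = (\<Sum>(i,j)\<in>S. (E i t * jcoord v idx i j M u) *s v i j 1)" for t u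
  proof -
    have "Q1 p lam d m v idx t = (\<Sum>(i,j)\<in>S. (\<chi> r c. E i t * (v i j 1 $ r * jrow v idx i j M $ c)))"
      unfolding Q1_def S_def M_def E_def by simp
    then show ?thesis
      apply (simp add: vec_eq_iff matrix_vector_mult_def sum_component case_prod_beta jcoord_def sum_distrib_left sum_distrib_right)
      apply (subst sum.swap)
      apply (simp add: mult_ac)
      done
  qed
  have finJ': "finite ((\<lambda>(i,j,k). (i,j)) ` jidx p d m)" using finJ by simp
  have S1: "(i,j,1) \<in> jidx p d m \<and> (i,j,M) \<in> jidx p d m" if "(i,j) \<in> S" for i j
    using that dm[of i j] unfolding S_def Lam1_def jidx_def by auto
  have "S \<subseteq> (\<lambda>(i,j,k). (i,j)) ` jidx p d m"
  proof
    fix s assume "s \<in> S"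
    then obtain i j where s: "s = (i,j)" "(i,j) \<in> S" by (metis surj_pair)
    then have "(i,j,1) \<in> jidx p d m" using S1 by blast
    then show "s \<in> (\<lambda>(i,j,k). (i,j)) ` jidx p d m" using s by force
  qed
  then have finS: "finite S" using finJ' finite_subset by blast
  have normE: "cmod (E i t) = 1" for i t by (simp add: E_def norm_exp_eq_Re)
  obtain \<kappa> where ka: "\<kappa> > 0" "\<And>x. \<kappa> * norm x \<le> N x" using vn_lower[OF norm] by blast
  obtain BW where BW: "BW > 0" "\<And>x. norm (W *v x) \<le> norm x * BW"
    using bounded_linear.pos_bounded[OF matrix_vector_mul_bounded_linear[of W]] by blast
  have Wbd: "norm (W *v x) \<le> BW / \<kappa> * N x" for x
  proof -
    have "norm x \<le> N x / \<kappa>" using ka(2)[of x] ka(1) by (simp add: pos_le_divide_eq mult.commute)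
    then have "norm x * BW \<le> N x / \<kappa> * BW" using BW(1) by (intro mult_right_mono) auto
    also have "N x / \<kappa> * BW = BW / \<kappa> * N x" by (simp add: field_simps)
    finally show ?thesis using BW(2)[of x] by linarith
  qed
  have coord_bd: "cmod (jcoord v idx i j k u) \<le> BW / \<kappa> * N u" for i j k u
    unfolding jc using Finite_Cartesian_Product.norm_nth_le[of "W *v u" "inv idx (i,j,k)"] Wbd[of u] by linarith
  define C where "C = BW / \<kappa> * (\<Sum>(i,j)\<in>S. N (v i j 1)) + 1"
  have Cpos: "C > 0" unfolding C_def using BW ka vn_nonneg[OF norm]
    by (intro add_nonneg_pos mult_nonneg_nonneg sum_nonneg) (auto simp: case_prod_beta)
  have upper: "N (Q1 p lam d m v idx t *v u) \<le> C * N u" for t u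
  proof -
    have "N (Q1 p lam d m v idx t *v u) \<le> (\<Sum>(i,j)\<in>S. N ((E i t * jcoord v idx i j M u) *s v i j 1))"
      unfolding Qapp by (rule order_trans[OF vn_sum[OF norm finS]]) (simp add: case_prod_beta)
    also have "\<dots> = (\<Sum>(i,j)\<in>S. cmod (jcoord v idx i j M u) * N (v i j 1))"
      by (simp add: vn_scale[OF norm] norm_mult normE case_prod_beta)
    also have "\<dots> \<le> (\<Sum>(i,j)\<in>S. BW / \<kappa> * N u * N (v i j 1))"
      unfolding case_prod_beta
      by (intro sum_mono mult_right_mono coord_bd vn_nonneg[OF norm])
    also have "\<dots> = BW / \<kappa> * (\<Sum>(i,j)\<in>S. N (v i j 1)) * N u"
      by (simp add: sum_distrib_left sum_distrib_right case_prod_beta mult_ac)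
    also have "\<dots> \<le> C * N u" unfolding C_def using vn_nonneg[OF norm, of u] by (simp add: algebra_simps)
    finally show ?thesis .
  qed
  have lower: "\<exists>l>0. \<forall>t. l \<le> N (Q1 p lam d m v idx t *v u)" if r: "rlge p lam d m v idx u" for u
  proof -
    obtain i0 j0 where ij0: "(i0,j0) \<in> S" "jcoord v idx i0 j0 M u \<noteq> 0"
      using r unfolding rlge_def S_def M_def by auto
    define \<beta> where "\<beta> = (\<lambda>t s. E (fst s) t * jcoord v idx (fst s) (snd s) M u)"
    define a where "a = (\<lambda>s. inv idx (fst s, snd s, 1::nat))"
    have ainj: "a s = a (i0,j0) \<longleftrightarrow> s = (i0,j0)" if "s \<in> S" for s
    proof
      assume "a s = a (i0,j0)"
      then have "idx (a s) = idx (a (i0,j0))" by simp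
      then show "s = (i0,j0)" using idxinv S1 that ij0(1) unfolding a_def
        by (metis (no_types, lifting) prod.collapse prod.inject)
    qed simp
    have ainj2: "a (i0,j0) = a s \<longleftrightarrow> s = (i0,j0)" if "s \<in> S" for s
      using ainj[OF that] by auto
    have WQ: "W *v (Q1 p lam d m v idx t *v u) = (\<Sum>s\<in>S. \<beta> t s *s axis (a s) 1)" for t
      unfolding Qapp vec.sum
    proof (rule sum.cong)
      fix s assume "s \<in> S"
      then obtain i j where s: "s = (i,j)" "(i,j) \<in> S" by (metis surj_pair)
      show "W *v (case s of (i, j) \<Rightarrow> (E i t * jcoord v idx i j M u) *s v i j 1) = \<beta> t s *s axis (a s) 1"
        using s S1[OF s(2)] by (simp add: vector_scalar_commute Wv \<beta>_def a_def)
    qed simp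
    have comp: "(W *v (Q1 p lam d m v idx t *v u)) $ a (i0,j0) = \<beta> t (i0,j0)" for t
    proof -
      have "(W *v (Q1 p lam d m v idx t *v u)) $ a (i0,j0) = (\<Sum>s\<in>S. if s = (i0,j0) then \<beta> t s else 0)"
        unfolding WQ sum_component
        by (rule sum.cong) (auto simp: axis_def ainj2)
      also have "\<dots> = \<beta> t (i0,j0)" using finS ij0(1) by simp
      finally show ?thesis .
    qed
    define l where "l = cmod (jcoord v idx i0 j0 M u) / (BW / \<kappa>)"
    have lpos: "l > 0" unfolding l_def using ij0(2) BW ka by simp
    have "l \<le> N (Q1 p lam d m v idx t *v u)" for t
    proof -
      have "cmod (jcoord v idx i0 j0 M u) = cmod (\<beta> t (i0,j0))" by (simp add: \<beta>_def norm_mult normE)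
      also have "\<dots> \<le> norm (W *v (Q1 p lam d m v idx t *v u))"
        unfolding comp[symmetric] by (rule Finite_Cartesian_Product.norm_nth_le)
      also have "\<dots> \<le> BW / \<kappa> * N (Q1 p lam d m v idx t *v u)" by (rule Wbd)
      finally have h: "cmod (jcoord v idx i0 j0 M u) \<le> BW / \<kappa> * N (Q1 p lam d m v idx t *v u)" .
      have q: "BW / \<kappa> > 0" using BW(1) ka(1) by simp
      show ?thesis unfolding l_def
        by (rule pos_divide_le_eq[THEN iffD2, OF q]) (metis h mult.commute)
    qed
    then show ?thesis using lpos by blast
  qed
  have jcs: "jcoord v idx i j k (c *s y) = c * jcoord v idx i j k y" for i j k c y
    unfolding jc by (simp add: vector_scalar_commute)
  have "idx undefined \<in> jidx p d m" using rng by blast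
  then have p1: "1 \<le> p" by (auto simp: jidx_def)
  define R where "R = (\<lambda>i. Re (lam i)) ` {1..p}"
  have finR: "finite R" and neR: "R \<noteq> {}" using p1 by (auto simp: R_def)
  then have "Max R \<in> R" by simp
  then obtain i1 where i1: "i1 \<in> {1..p}" "Re (lam i1) = Max R" by (auto simp: R_def)
  have i1L: "i1 \<in> Lam1 p lam" unfolding Lam1_def
  proof (intro CollectI conjI ballI)
    show "i1 \<in> {1..p}" by (rule i1(1))
    fix i' assume "i' \<in> {1..p}"
    then have "Re (lam i') \<in> R" by (simp add: R_def)
    then show "Re (lam i') \<le> Re (lam i1)" using i1(2) Max_ge[OF finR] by simp
  qed
  define T where "T = {m i j | i j. i \<in> Lam1 p lam \<and> j \<in> {1..d i}}"
  have "T \<subseteq> (\<lambda>(i,j,k). m i j) ` jidx p d m"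
  proof
    fix x assume "x \<in> T"
    then obtain i j where ij: "x = m i j" "i \<in> Lam1 p lam" "j \<in> {1..d i}" unfolding T_def by blast
    then have "(i,j,1) \<in> jidx p d m" using dm[of i j] unfolding Lam1_def jidx_def by auto
    then show "x \<in> (\<lambda>(i,j,k). m i j) ` jidx p d m" using ij(1) by force
  qed
  then have finT: "finite T" using finJ finite_subset by blast
  have "1 \<le> d i1" using dm[of i1 1] i1(1) by blast
  then have "m i1 1 \<in> T" unfolding T_def using i1L by auto
  then have "T \<noteq> {}" by blast
  then have "Max T \<in> T" using finT by simp
  moreover have MT: "M = Max T" unfolding M_def M1_def T_def by simp
  ultimately obtain i0 j0 where ij0: "i0 \<in> Lam1 p lam" "j0 \<in> {1..d i0}" "m i0 j0 = M"
    unfolding T_def by auto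
  have ij0S: "(i0,j0) \<in> S" unfolding S_def using ij0 by simp
  define u0 where "u0 = v i0 j0 M"
  have Wu0: "W *v u0 = axis (inv idx (i0,j0,M)) 1" unfolding u0_def using S1[OF ij0S] Wv by blast
  have ju0: "jcoord v idx i0 j0 M u0 = 1" unfolding jc Wu0 by (simp add: axis_def)
  have r0: "rlge p lam d m v idx u0" unfolding rlge_def M_def[symmetric]
    using ij0 ju0 by (intro exI[of _ i0] exI[of _ j0]) simp
  have u0nz: "u0 \<noteq> 0"
  proof
    assume "u0 = 0"
    then have "W *v u0 = 0" by simp
    then show False using ju0 unfolding jc by simp
  qed
  obtain l0 where l0: "l0 > 0" "\<And>t. l0 \<le> N (Q1 p lam d m v idx t *v u0)" using lower[OF r0] by blast
  have Nu0: "N u0 > 0" by (rule vn_pos[OF norm u0nz])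
  define c1 where "c1 = l0 / N u0"
  have c1pos: "c1 > 0" unfolding c1_def using l0(1) Nu0 by simp
  have indlow: "c1 \<le> ind_norm N (Q1 p lam d m v idx t)" for t
  proof -
    have "c1 \<le> N (Q1 p lam d m v idx t *v u0) / N u0"
      unfolding c1_def using l0(2)[of t] Nu0 by (simp add: divide_right_mono)
    also have "\<dots> \<le> ind_norm N (Q1 p lam d m v idx t)"
      by (rule ind_norm_ge[OF norm upper u0nz])
    finally show ?thesis .
  qed
  have indup: "ind_norm N (Q1 p lam d m v idx t) \<le> C" for t
    by (rule ind_norm_le[OF norm upper])
  have claim1: "(INF t. ind_norm N (Q1 p lam d m v idx t)) > 0"
  proof -
    have "c1 \<le> (INF t. ind_norm N (Q1 p lam d m v idx t))"
      by (rule cINF_greatest) (auto intro: indlow)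
    then show ?thesis using c1pos by linarith
  qed
  have claim2: "\<forall>u. rlge p lam d m v idx u \<longrightarrow> (INF t. N (Q1 p lam d m v idx t *v u)) > 0"
  proof (intro allI impI)
    fix u assume "rlge p lam d m v idx u"
    then obtain l where l: "l > 0" "\<And>t. l \<le> N (Q1 p lam d m v idx t *v u)" using lower by blast
    have "l \<le> (INF t. N (Q1 p lam d m v idx t *v u))"
      by (rule cINF_greatest) (auto intro: l(2))
    then show "(INF t. N (Q1 p lam d m v idx t *v u)) > 0" using l(1) by linarith
  qed
  have claim3: "\<forall>y0 z0. y0 \<noteq> 0 \<and> N z0 = 1 \<and> rlge p lam d m v idx y0 \<and> rlge p lam d m v idx z0 \<longrightarrow>
        (let yh = (1 / N y0) *s y0;
             f = (\<lambda>t. N (Q1 p lam d m v idx t *v z0) / N (Q1 p lam d m v idx t *v yh));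
             g = (\<lambda>t. ind_norm N (Q1 p lam d m v idx t) / N (Q1 p lam d m v idx t *v yh))
         in (\<exists>B. \<forall>t. \<bar>f t\<bar> \<le> B) \<and> (\<exists>c>0. \<forall>t. f t \<ge> c)
          \<and> (\<exists>B. \<forall>t. \<bar>g t\<bar> \<le> B) \<and> (\<exists>c>0. \<forall>t. g t \<ge> c))"
  proof (intro allI impI)
    fix y0 z0 assume H: "y0 \<noteq> 0 \<and> N z0 = 1 \<and> rlge p lam d m v idx y0 \<and> rlge p lam d m v idx z0"
    have Ny0: "N y0 > 0" using vn_pos[OF norm] H by blast
    have Nyh: "N ((1 / N y0) *s y0) = 1" using Ny0 by (simp add: vn_scale[OF norm] norm_divide)
    have ryh: "rlge p lam d m v idx ((1 / N y0) *s y0)"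
      using H Ny0 unfolding rlge_def jcs by auto
    obtain ly where ly: "ly > 0" "\<And>t. ly \<le> N (Q1 p lam d m v idx t *v ((1 / N y0) *s y0))"
      using lower[OF ryh] by blast
    obtain lz where lz: "lz > 0" "\<And>t. lz \<le> N (Q1 p lam d m v idx t *v z0)"
      using lower H by blast
    have uy: "N (Q1 p lam d m v idx t *v ((1 / N y0) *s y0)) \<le> C" for t
      using upper[of t "(1 / N y0) *s y0"] Nyh by simp
    have uz: "N (Q1 p lam d m v idx t *v z0) \<le> C" for t
      using upper[of t z0] H by simp
    note rb1 = ratio_bounds[OF lz(1) lz(2) uz ly(1) ly(2) uy]
    note rb2 = ratio_bounds[OF c1pos indlow indup ly(1) ly(2) uy]
    show "let yh = (1 / N y0) *s y0;
             f = (\<lambda>t. N (Q1 p lam d m v idx t *v z0) / N (Q1 p lam d m v idx t *v yh));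
             g = (\<lambda>t. ind_norm N (Q1 p lam d m v idx t) / N (Q1 p lam d m v idx t *v yh))
         in (\<exists>B. \<forall>t. \<bar>f t\<bar> \<le> B) \<and> (\<exists>c>0. \<forall>t. f t \<ge> c)
          \<and> (\<exists>B. \<forall>t. \<bar>g t\<bar> \<le> B) \<and> (\<exists>c>0. \<forall>t. g t \<ge> c)"
      unfolding Let_def
    proof (intro conjI exI allI)
      show "lz / C > 0" "c1 / C > 0" using lz(1) c1pos Cpos by simp_all
    qed (use rb1 rb2 in auto)
  qed
  show ?thesis using claim1 claim2 claim3 by blast
qed

end
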